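(* Let $\hat s:\Delta_{\mathcal Y}\times\mathcal Y\to\mathbb R\cup\{\pm\infty\}$ be a permutation-invariant regular classical scoring rule, $\mathcal Y=\{1,\dots,n\}$, and let $S=S[\hat s]$ be the corresponding spectral quantum score on $\mathbb C^n$. Then $S$ is truthful if and only if $\hat s$ is proper, and $S$ is strictly truthful if and only if $\hat s$ is strictly proper.
   Context: $\lambda(\rho)$ denotes the eigenvalues of $\rho$ in decreasing order; $\mathrm{Dens}(\mathbb C^n)$ the density matrices; $\langle X,Y\rangle=\mathrm{Tr}(X^*Y)$. A classical scoring rule $\hat s$ has expected score $\hat s(q;p)=\sum_yp_y\hat s(q,y)$ ($0\cdot\pm\infty=0$); it is proper if $\hat s(q;p)\le\hat s(p;p)$ for all $p,q\in\Delta_{\mathcal Y}$, strictly proper if strict for $q\neq p$, regular if $\hat s(q;p)\in\mathbb R\cup\{-\infty\}$ and $\hat s(p;p)\in\mathbb R$ for all $p,q$; permutation-invariant if $\hat s(p,y)=\hat s(\pi p,\pi_y)$ for every permutation $\pi$, $(\pi p)_y=p_{\pi_y}$. The spectral score $S[\hat s]=(s,\mu^{\mathrm{spec}})$: $\mu^{\mathrm{spec}}(\rho)=\{x_yx_y^*\}_{y\in\mathcal Y}$ for an arbitrary orthonormal eigenbasis with $\rho=\sum_y\lambda(\rho)_yx_yx_y^*$, and $s(\rho,y)=\hat s(\lambda(\rho),y)$; expected score $S(\rho';\rho)=\sum_y\langle\mu^{\mathrm{spec}}(\rho')_y,\rho\rangle s(\rho',y)$. $S$ is truthful if $S(\rho;\rho)\ge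 S(\rho';\rho)$ for all $\rho,\rho'$, strictly truthful if strict when $\rho'\neq\rho$. *)

theory Defs
  imports "Jordan_Normal_Form.Schur_Decomposition"
          "HOL-Combinatorics.Permutations"
          "HOL-Library.Extended_Real"
begin

text \<open>Outcomes: \<open>Y = {0..<n}\<close> (the paper's \<open>{1,...,n}\<close>, shifted by one).\<close>

definition simplex :: "nat \<Rightarrow> (nat \<Rightarrow> real) set" where
  "simplex n = {p. (\<forall>y<n. 0 \<le> p y) \<and> (\<forall>y\<ge>n. p y = 0) \<and> (\<Sum>y<n. p y) = 1}"

text \<open>Classical scoring rule: \<open>s :: (nat \<Rightarrow> real) \<Rightarrow> nat \<Rightarrow> ereal\<close>;
  expected score with the convention \<open>0 \<cdot> \<plusminus>\<infinity> = 0\<close>.\<close>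

definition exp_score :: "nat \<Rightarrow> ((nat \<Rightarrow> real) \<Rightarrow> nat \<Rightarrow> ereal) \<Rightarrow> (nat \<Rightarrow> real) \<Rightarrow> (nat \<Rightarrow> real) \<Rightarrow> ereal" where
  "exp_score n s q p = (\<Sum>y<n. if p y = 0 then 0 else ereal (p y) * s q y)"

definition proper :: "nat \<Rightarrow> ((nat \<Rightarrow> real) \<Rightarrow> nat \<Rightarrow> ereal) \<Rightarrow> bool" where
  "proper n s \<longleftrightarrow> (\<forall>p\<in>simplex n. \<forall>q\<in>simplex n. exp_score n s q p \<le> exp_score n s p p)"

definition strictly_proper :: "nat \<Rightarrow> ((nat \<Rightarrow> real) \<Rightarrow> nat \<Rightarrow> ereal) \<Rightarrow> bool" where
  "strictly_proper n s \<longleftrightarrow>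
     (\<forall>p\<in>simplex n. \<forall>q\<in>simplex n. q \<noteq> p \<longrightarrow> exp_score n s q p < exp_score n s p p)"

definition regular :: "nat \<Rightarrow> ((nat \<Rightarrow> real) \<Rightarrow> nat \<Rightarrow> ereal) \<Rightarrow> bool" where
  "regular n s \<longleftrightarrow>
     (\<forall>p\<in>simplex n. \<forall>q\<in>simplex n. exp_score n s q p \<noteq> \<infinity>) \<and>
     (\<forall>p\<in>simplex n. exp_score n s p p \<noteq> \<infinity> \<and> exp_score n s p p \<noteq> -\<infinity>)"

text \<open>Permutation invariance: relabelling outcomes by \<open>\<pi>\<close> (so that \<open>(\<pi> p) (\<pi> y) = p y\<close>)
  does not change the score.\<close>

definition perm_dist :: "(nat \<Rightarrow> nat) \<Rightarrow> (nat \<Rightarrow> real) \<Rightarrow> (nat \<Rightarrow> real)" where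
  "perm_dist \<pi> p = p \<circ> inv_into UNIV \<pi>"

definition perm_invariant :: "nat \<Rightarrow> ((nat \<Rightarrow> real) \<Rightarrow> nat \<Rightarrow> ereal) \<Rightarrow> bool" where
  "perm_invariant n s \<longleftrightarrow>
     (\<forall>\<pi>. \<pi> permutes {..<n} \<longrightarrow>
        (\<forall>p\<in>simplex n. \<forall>y<n. s p y = s (perm_dist \<pi> p) (\<pi> y)))"

definition mtrace :: "complex mat \<Rightarrow> complex" where
  "mtrace A = (\<Sum>i<dim_row A. A $$ (i, i))"

definition hs_inner :: "complex mat \<Rightarrow> complex mat \<Rightarrow> complex" where
  "hs_inner X Y = mtrace (mat_adjoint X * Y)"

definition outer :: "complex vec \<Rightarrow> complex mat" where
  "outer x = mat (dim_vec x) (dim_vec x) (\<lambda>(i, j). x $ i * cnj (x $ j))"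

definition Dens :: "nat \<Rightarrow> complex mat set" where
  "Dens n = {\<rho>. \<rho> \<in> carrier_mat n n \<and> mat_adjoint \<rho> = \<rho> \<and>
                 (\<forall>v\<in>carrier_vec n. 0 \<le> Re (v \<bullet>c (\<rho> *\<^sub>v v))) \<and> mtrace \<rho> = 1}"

definition eigvals :: "nat \<Rightarrow> complex mat \<Rightarrow> (nat \<Rightarrow> real)" where
  "eigvals n \<rho> = (THE l. (\<forall>i\<ge>n. l i = 0) \<and> (\<forall>i j. i \<le> j \<longrightarrow> j < n \<longrightarrow> l j \<le> l i) \<and>
        char_poly \<rho> = (\<Prod>i<n. [:- complex_of_real (l i), 1:]))"

definition ordered_eigenbasis :: "nat \<Rightarrow> complex mat \<Rightarrow> (nat \<Rightarrow> complex vec) \<Rightarrow> bool" where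
  "ordered_eigenbasis n \<rho> x \<longleftrightarrow>
     (\<forall>y<n. x y \<in> carrier_vec n) \<and>
     (\<forall>y<n. \<forall>z<n. x y \<bullet>c x z = (if y = z then 1 else 0)) \<and>
     (\<forall>i<n. \<forall>j<n. \<rho> $$ (i, j) =
        (\<Sum>y<n. complex_of_real (eigvals n \<rho> y) * outer (x y) $$ (i, j)))"

definition spectral_measurement :: "nat \<Rightarrow> (complex mat \<Rightarrow> nat \<Rightarrow> complex mat) \<Rightarrow> bool" where
  "spectral_measurement n \<mu> \<longleftrightarrow>
     (\<forall>\<rho>\<in>Dens n. \<exists>x. ordered_eigenbasis n \<rho> x \<and> (\<forall>y<n. \<mu> \<rho> y = outer (x y)))"

text \<open>Expected score of the spectral score \<open>S[s] = (s, \<mu>)\<close>, \<open>s(\<rho>,y) = \<hat>s(\<lambda>(\<rho>),y)\<close>: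
  \<open>S(\<rho>';\<rho>) = \<Sum>\<^sub>y \<langle>\<mu>(\<rho>')\<^sub>y,\<rho>\<rangle> s(\<rho>',y)\<close> (the inner products are real).\<close>

definition spec_exp_score ::
  "nat \<Rightarrow> ((nat \<Rightarrow> real) \<Rightarrow> nat \<Rightarrow> ereal) \<Rightarrow> (complex mat \<Rightarrow> nat \<Rightarrow> complex mat) \<Rightarrow>
   complex mat \<Rightarrow> complex mat \<Rightarrow> ereal" where
  "spec_exp_score n s \<mu> \<rho>' \<rho> =
     (\<Sum>y<n. let w = Re (hs_inner (\<mu> \<rho>' y) \<rho>) in
              if w = 0 then 0 else ereal w * s (eigvals n \<rho>') y)"

definition truthful :: "nat \<Rightarrow> ((nat \<Rightarrow> real) \<Rightarrow> nat \<Rightarrow> ereal) \<Rightarrow> (complex mat \<Rightarrow> nat \<Rightarrow> complex mat) \<Rightarrow> bool" where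
  "truthful n s \<mu> \<longleftrightarrow>
     (\<forall>\<rho>\<in>Dens n. \<forall>\<rho>'\<in>Dens n. spec_exp_score n s \<mu> \<rho>' \<rho> \<le> spec_exp_score n s \<mu> \<rho> \<rho>)"

definition strictly_truthful :: "nat \<Rightarrow> ((nat \<Rightarrow> real) \<Rightarrow> nat \<Rightarrow> ereal) \<Rightarrow> (complex mat \<Rightarrow> nat \<Rightarrow> complex mat) \<Rightarrow> bool" where
  "strictly_truthful n s \<mu> \<longleftrightarrow>
     (\<forall>\<rho>\<in>Dens n. \<forall>\<rho>'\<in>Dens n. \<rho>' \<noteq> \<rho> \<longrightarrow> spec_exp_score n s \<mu> \<rho>' \<rho> < spec_exp_score n s \<mu> \<rho> \<rho>)"

end

theory Submission
  imports Defs
begin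



lemma sort_perm:
  fixes f :: "nat \<Rightarrow> 'a::linorder"
  shows "\<exists>\<sigma>. \<sigma> permutes {..<n} \<and> (\<forall>i j. i \<le> j \<longrightarrow> j < n \<longrightarrow> f (\<sigma> j) \<le> f (\<sigma> i))"
proof (induction n arbitrary: f)
  case 0
  show ?case by (rule exI[of _ id]) (auto simp: permutes_id)
next
  case (Suc n)
  have "Min (f ` {..<Suc n}) \<in> f ` {..<Suc n}" by (intro Min_in) auto
  then obtain m where m1: "m < Suc n" and mm: "f m = Min (f ` {..<Suc n})" by auto
  have m2: "\<And>k. k < Suc n \<Longrightarrow> f m \<le> f k" unfolding mm by (intro Min_le) auto
  let ?t = "Transposition.transpose m n"
  from Suc.IH[of "f \<circ> ?t"] obtain \<sigma> where s: "\<sigma> permutes {..<n}"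
    and d: "\<forall>i j. i \<le> j \<longrightarrow> j < n \<longrightarrow> (f\<circ>?t) (\<sigma> j) \<le> (f\<circ>?t) (\<sigma> i)" by blast
  have tp: "?t permutes {..<Suc n}" using m1 by (intro permutes_swap_id) auto
  have sp: "\<sigma> permutes {..<Suc n}" using s by (rule permutes_subset) auto
  show ?case
  proof (intro exI[of _ "?t \<circ> \<sigma>"] conjI allI impI)
    show "?t \<circ> \<sigma> permutes {..<Suc n}" using permutes_compose[OF sp tp] .
    fix i j assume ij: "i \<le> j" "j < Suc n"
    show "f ((?t \<circ> \<sigma>) j) \<le> f ((?t \<circ> \<sigma>) i)"
    proof (cases "j = n")
      case True
      then have "\<sigma> j = j" using s permutes_not_in by fastforce
      then have "?t (\<sigma> j) = m" using True by simp
      moreover have "?t (\<sigma> i) < Suc n" using ij permutes_in_image[OF permutes_compose[OF sp tp]] by auto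
      ultimately show ?thesis using m2 by auto
    next
      case False then show ?thesis using d ij by auto
    qed
  qed
qed

lemma abel:
  fixes lam g :: "nat \<Rightarrow> real"
  assumes "\<forall>i j. i \<le> j \<longrightarrow> j < n \<longrightarrow> lam j \<le> lam i" "\<forall>i<n. 0 \<le> lam i"
    "\<forall>k\<le>n. 0 \<le> (\<Sum>z<k. g z)"
  shows "0 \<le> (\<Sum>z<n. lam z * g z)"
  using assms
proof (induction n arbitrary: lam)
  case 0 then show ?case by simp
next
  case (Suc n)
  let ?l = "\<lambda>z. lam z - lam n"
  have "0 \<le> (\<Sum>z<n. ?l z * g z)"
    using Suc.prems by (intro Suc.IH) auto
  moreover have "0 \<le> lam n * (\<Sum>z<Suc n. g z)"
    using Suc.prems by auto
  moreover have "(\<Sum>z<Suc n. lam z * g z) = (\<Sum>z<n. ?l z * g z) + lam n * (\<Sum>z<Suc n. g z)"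
    by (simp add: algebra_simps sum_subtractf sum_distrib_left)
  ultimately show ?case by linarith
qed

lemma sum_if_less:
  fixes f :: "nat \<Rightarrow> 'b::comm_monoid_add"
  assumes "k \<le> n"
  shows "(\<Sum>j<n. if j < k then f j else 0) = (\<Sum>j<k. f j)"
proof -
  have "(\<Sum>j<n. if j < k then f j else 0) = (\<Sum>j<n. if j \<in> {..<k} then f j else 0)" by simp
  also have "\<dots> = sum f ({..<n} \<inter> {..<k})" by (rule sum.inter_restrict[symmetric]) simp
  also have "{..<n} \<inter> {..<k} = {..<k}" using assms by auto
  finally show ?thesis .
qed

lemma topsum:
  fixes t c :: "nat \<Rightarrow> real"
  assumes sp: "\<sigma> permutes {..<n}" and dec: "\<forall>i j. i \<le> j \<longrightarrow> j < n \<longrightarrow> c (\<sigma> j) \<le> c (\<sigma> i)"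
    and t01: "\<forall>y<n. 0 \<le> t y \<and> t y \<le> 1" and ts: "(\<Sum>y<n. t y) = real k" and kn: "k \<le> n"
  shows "(\<Sum>y<n. t y * c y) \<le> (\<Sum>j<k. c (\<sigma> j))"
proof -
  let ?u = "\<lambda>j. t (\<sigma> j)" and ?b = "\<lambda>j. c (\<sigma> j)"
  define \<theta> where "\<theta> = ?b (k - 1)"
  have in\<sigma>: "\<And>j. j < n \<Longrightarrow> \<sigma> j < n" using permutes_in_image[OF sp] by auto
  have e1: "(\<Sum>y<n. t y * c y) = (\<Sum>j<n. ?u j * ?b j)"
    using sum.permute[OF sp, of "\<lambda>y. t y * c y"] by (simp add: comp_def)
  have e2: "(\<Sum>j<n. ?u j) = real k"
    using sum.permute[OF sp, of t] ts by (simp add: comp_def)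
  have e3: "(\<Sum>j<k. ?b j) = (\<Sum>j<n. if j < k then ?b j else 0)"
    using sum_if_less[OF kn, of "\<lambda>j. c (\<sigma> j)"] by simp
  have e4: "(\<Sum>j<n. (if j < k then 1 else 0::real)) = real k"
    using sum_if_less[OF kn, of "\<lambda>_. 1::real"] by simp
  have pw: "?u j * ?b j - (if j < k then ?b j else 0) \<le> (?u j - (if j < k then 1 else 0)) * \<theta>"
    if j: "j < n" for j
  proof (cases "j < k")
    case True
    have "?b (k - 1) \<le> ?b j" using dec True kn by auto
    moreover have "?u j \<le> 1" using t01 in\<sigma>[OF j] by auto
    ultimately have "(?u j - 1) * (?b j - \<theta>) \<le> 0" unfolding \<theta>_def
      by (intro mult_nonpos_nonneg) auto
    then show ?thesis using True by (simp add: algebra_simps)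
  next
    case False
    have "?b j \<le> ?b (k - 1)" using dec False j by auto
    moreover have "0 \<le> ?u j" using t01 in\<sigma>[OF j] by auto
    ultimately have "?u j * ?b j \<le> ?u j * \<theta>" unfolding \<theta>_def by (intro mult_left_mono)
    then show ?thesis using False by simp
  qed
  have "(\<Sum>j<n. ?u j * ?b j - (if j < k then ?b j else 0)) \<le> (\<Sum>j<n. (?u j - (if j < k then 1 else 0)) * \<theta>)"
    using pw by (intro sum_mono) auto
  also have "\<dots> = ((\<Sum>j<n. ?u j) - (\<Sum>j<n. (if j < k then 1 else 0))) * \<theta>"
    by (simp only: sum_distrib_right[symmetric] sum_subtractf)
  also have "\<dots> = 0" using e2 e4 by simp
  finally show ?thesis using e1 e3 by (simp add: sum_subtractf)
qed

lemma rearr: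
  fixes c lam :: "nat \<Rightarrow> real" and B :: "nat \<Rightarrow> nat \<Rightarrow> real"
  assumes sp: "\<sigma> permutes {..<n}" and dec: "\<forall>i j. i \<le> j \<longrightarrow> j < n \<longrightarrow> c (\<sigma> j) \<le> c (\<sigma> i)"
    and ldec: "\<forall>i j. i \<le> j \<longrightarrow> j < n \<longrightarrow> lam j \<le> lam i" and lnn: "\<forall>z<n. 0 \<le> lam z"
    and Bnn: "\<forall>y<n. \<forall>z<n. 0 \<le> B y z" and rows: "\<forall>y<n. (\<Sum>z<n. B y z) = 1"
    and cols: "\<forall>z<n. (\<Sum>y<n. B y z) = 1"
  shows "(\<Sum>y<n. (\<Sum>z<n. B y z * lam z) * c y) \<le> (\<Sum>k<n. lam k * c (\<sigma> k))"
proof -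
  define e where "e z = (\<Sum>y<n. B y z * c y)" for z
  have "(\<Sum>y<n. (\<Sum>z<n. B y z * lam z) * c y) = (\<Sum>y<n. \<Sum>z<n. B y z * lam z * c y)"
    by (simp add: sum_distrib_right)
  also have "\<dots> = (\<Sum>z<n. \<Sum>y<n. B y z * lam z * c y)" by (rule sum.swap)
  also have "\<dots> = (\<Sum>z<n. lam z * e z)" unfolding e_def by (simp add: sum_distrib_left mult_ac)
  finally have L: "(\<Sum>y<n. (\<Sum>z<n. B y z * lam z) * c y) = (\<Sum>z<n. lam z * e z)" .
  have part: "0 \<le> (\<Sum>z<k. c (\<sigma> z) - e z)" if k: "k \<le> n" for k
  proof -
    define t where "t y = (\<Sum>z<k. B y z)" for y
    have t01: "\<forall>y<n. 0 \<le> t y \<and> t y \<le> 1"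
    proof (intro allI impI conjI)
      fix y assume y: "y < n"
      show "0 \<le> t y" unfolding t_def using Bnn y k by (intro sum_nonneg) auto
      have "t y \<le> (\<Sum>z<n. B y z)" unfolding t_def using Bnn y k by (intro sum_mono2) auto
      then show "t y \<le> 1" using rows y by simp
    qed
    have ts: "(\<Sum>y<n. t y) = real k"
    proof -
      have "(\<Sum>y<n. t y) = (\<Sum>z<k. \<Sum>y<n. B y z)" unfolding t_def by (rule sum.swap)
      also have "\<dots> = (\<Sum>z<k. 1)" using cols k by (intro sum.cong) auto
      finally show ?thesis by simp
    qed
    have "(\<Sum>y<n. t y * c y) \<le> (\<Sum>j<k. c (\<sigma> j))" by (rule topsum[OF sp dec t01 ts k])
    moreover have "(\<Sum>y<n. t y * c y) = (\<Sum>z<k. e z)"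
    proof -
      have "(\<Sum>y<n. t y * c y) = (\<Sum>y<n. \<Sum>z<k. B y z * c y)" unfolding t_def by (simp add: sum_distrib_right)
      also have "\<dots> = (\<Sum>z<k. \<Sum>y<n. B y z * c y)" by (rule sum.swap)
      finally show ?thesis unfolding e_def .
    qed
    ultimately show ?thesis by (simp add: sum_subtractf)
  qed
  have "0 \<le> (\<Sum>z<n. lam z * (c (\<sigma> z) - e z))"
    using ldec lnn part by (intro abel) auto
  then show ?thesis unfolding L by (simp add: algebra_simps sum_subtractf)
qed




lemma simplex_perm:
  assumes sp: "\<sigma> permutes {..<n}" and p: "p \<in> simplex n"
  shows "p \<circ> \<sigma> \<in> simplex n"
proof -
  have "\<forall>y<n. 0 \<le> p (\<sigma> y)" using p permutes_in_image[OF sp] unfolding simplex_def by auto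
  moreover have "\<forall>y\<ge>n. p (\<sigma> y) = 0" using p permutes_not_in[OF sp] unfolding simplex_def by auto
  moreover have "(\<Sum>y<n. p (\<sigma> y)) = 1" using sum.permute[OF sp, of p] p unfolding simplex_def by (simp add: comp_def)
  ultimately show ?thesis unfolding simplex_def by auto
qed

lemma perm_score:
  assumes pi: "perm_invariant n s" and sp: "\<sigma> permutes {..<n}" and q: "q \<in> simplex n" and y: "y < n"
  shows "s (q \<circ> \<sigma>) y = s q (\<sigma> y)"
proof -
  have q': "q \<circ> \<sigma> \<in> simplex n" by (rule simplex_perm[OF sp q])
  have "perm_dist \<sigma> (q \<circ> \<sigma>) = q"
    unfolding perm_dist_def using permutes_surj[OF sp] by (auto simp: fun_eq_iff surj_f_inv_f)
  then show ?thesis using pi sp q' y unfolding perm_invariant_def by metis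
qed

lemma exp_perm:
  assumes pi: "perm_invariant n s" and sp: "\<sigma> permutes {..<n}" and q: "q \<in> simplex n"
  shows "exp_score n s (q \<circ> \<sigma>) (p \<circ> \<sigma>) = exp_score n s q p"
proof -
  define g where "g z = (if p z = 0 then 0 else ereal (p z) * s q z)" for z
  have "exp_score n s (q \<circ> \<sigma>) (p \<circ> \<sigma>) = (\<Sum>y<n. g (\<sigma> y))"
    unfolding exp_score_def g_def using perm_score[OF pi sp q] permutes_in_image[OF sp]
    by (intro sum.cong) auto
  also have "\<dots> = (\<Sum>y<n. g y)" using sum.permute[OF sp, of g] by (simp add: comp_def)
  finally show ?thesis unfolding exp_score_def g_def .
qed

lemma score_fin:
  assumes reg: "regular n s" and q: "q \<in> simplex n" and y: "y < n"
  shows "s q y \<noteq> \<infinity>"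
proof -
  define d where "d z = (if z = y then 1 else 0::real)" for z
  have d: "d \<in> simplex n" unfolding simplex_def d_def using y by auto
  have "exp_score n s q d = (\<Sum>z<n. if z = y then s q y else 0)"
    unfolding exp_score_def d_def by (intro sum.cong) auto
  also have "\<dots> = s q y" using y by simp
  finally show ?thesis using reg d q unfolding regular_def by auto
qed

lemma sum_minf:
  fixes f :: "'a \<Rightarrow> ereal"
  assumes "finite A" "\<forall>x\<in>A. f x \<noteq> \<infinity>" "x0 \<in> A" "f x0 = -\<infinity>"
  shows "sum f A = -\<infinity>"
proof -
  have "sum f A = f x0 + sum f (A - {x0})" using assms by (simp add: sum.remove)
  moreover have "sum f (A - {x0}) \<noteq> \<infinity>" using assms by (simp add: sum_Pinfty)
  ultimately show ?thesis using assms by (cases "sum f (A - {x0})") auto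
qed

lemma exp_real:
  assumes "\<forall>y<n. p y \<noteq> 0 \<longrightarrow> \<bar>s q y\<bar> \<noteq> \<infinity>"
  shows "exp_score n s q p = ereal (\<Sum>y<n. p y * real_of_ereal (s q y))"
proof -
  have "(if p y = 0 then 0 else ereal (p y) * s q y) = ereal (p y * real_of_ereal (s q y))"
    if y: "y < n" for y
  proof (cases "p y = 0")
    case False
    then have "\<bar>s q y\<bar> \<noteq> \<infinity>" using assms y by auto
    then show ?thesis using False by (cases "s q y") auto
  qed simp
  then have "exp_score n s q p = (\<Sum>y<n. ereal (p y * real_of_ereal (s q y)))"
    unfolding exp_score_def by (intro sum.cong) auto
  then show ?thesis by (simp add: sum_ereal)
qed

lemma core:
  fixes lam w :: "nat \<Rightarrow> real" and B :: "nat \<Rightarrow> nat \<Rightarrow> real"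
  assumes lam: "lam \<in> simplex n" and ldec: "\<forall>i j. i \<le> j \<longrightarrow> j < n \<longrightarrow> lam j \<le> lam i"
    and Bnn: "\<forall>y<n. \<forall>z<n. 0 \<le> B y z" and rows: "\<forall>y<n. (\<Sum>z<n. B y z) = 1"
    and cols: "\<forall>z<n. (\<Sum>y<n. B y z) = 1"
    and w: "\<forall>y<n. w y = (\<Sum>z<n. B y z * lam z)"
    and fin: "\<forall>y<n. s q y \<noteq> \<infinity>"
  shows "\<exists>\<tau>. \<tau> permutes {..<n} \<and> exp_score n s q w \<le> exp_score n s q (lam \<circ> \<tau>)"
proof -
  define a where "a = s q"
  define r where "r y = real_of_ereal (a y)" for y
  obtain \<sigma> where sp: "\<sigma> permutes {..<n}"
    and sdec: "\<forall>i j. i \<le> j \<longrightarrow> j < n \<longrightarrow> a (\<sigma> j) \<le> a (\<sigma> i)"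
    using sort_perm[of n a] by blast
  define \<tau> where "\<tau> = inv_into UNIV \<sigma>"
  have tp: "\<tau> permutes {..<n}" unfolding \<tau>_def using permutes_inv[OF sp] by simp
  have ts: "\<And>k. \<tau> (\<sigma> k) = k" unfolding \<tau>_def using permutes_inj[OF sp] by (simp add: inv_f_f)
  have lnn: "\<forall>z<n. 0 \<le> lam z" and lsum: "(\<Sum>z<n. lam z) = 1" using lam unfolding simplex_def by auto
  have wnn: "\<forall>y<n. 0 \<le> w y" using w Bnn lnn by (auto intro!: sum_nonneg)
  have in\<sigma>: "\<And>j. j < n \<Longrightarrow> \<sigma> j < n" using permutes_in_image[OF sp] by auto
  define RHS where "RHS = (\<Sum>k<n. if lam k = 0 then 0 else ereal (lam k) * a (\<sigma> k))"
  have rhs: "exp_score n s q (lam \<circ> \<tau>) = RHS"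
  proof -
    define g where "g y = (if lam (\<tau> y) = 0 then 0 else ereal (lam (\<tau> y)) * a y)" for y
    have "exp_score n s q (lam \<circ> \<tau>) = sum g {..<n}"
      unfolding exp_score_def a_def g_def comp_def by (rule refl)
    also have "\<dots> = sum (g \<circ> \<sigma>) {..<n}" by (rule sum.permute[OF sp])
    finally show ?thesis unfolding RHS_def g_def comp_def ts .
  qed
  show ?thesis
  proof (cases "\<exists>y<n. w y \<noteq> 0 \<and> a y = -\<infinity>")
    case True
    then obtain y0 where y0: "y0 < n" "w y0 \<noteq> 0" "a y0 = -\<infinity>" by blast
    have "exp_score n s q w = -\<infinity>"
      unfolding exp_score_def
    proof (rule sum_minf)
      show "\<forall>y\<in>{..<n}. (if w y = 0 then 0 else ereal (w y) * s q y) \<noteq> \<infinity>"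
      proof
        fix y assume "y \<in> {..<n}"
        then have "s q y \<noteq> \<infinity>" "0 \<le> w y" using fin wnn by auto
        then show "(if w y = 0 then 0 else ereal (w y) * s q y) \<noteq> \<infinity>"
          by (cases "s q y") auto
      qed
      have "0 < w y0" using y0 wnn by force
      then show "(if w y0 = 0 then 0 else ereal (w y0) * s q y0) = -\<infinity>"
        using y0 a_def by auto
    qed (use y0 in auto)
    then show ?thesis using tp by auto
  next
    case False
    then have F: "\<forall>y<n. w y \<noteq> 0 \<longrightarrow> a y \<noteq> -\<infinity>" by auto
    define L where "L = (\<Sum>y<n. w y * r y)"
    have lhs: "exp_score n s q w = ereal L"
      unfolding L_def r_def a_def using F fin a_def by (intro exp_real) auto
    define R0 where "R0 = (\<Sum>k<n. lam k * r (\<sigma> k))"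
    define W where "W = (\<Sum>k<n. if a (\<sigma> k) = -\<infinity> then lam k else 0)"
    have key: "L \<le> R0 + M * W" if M: "\<forall>y<n. a y \<noteq> -\<infinity> \<longrightarrow> M \<le> r y" for M
    proof -
      define c where "c y = (if a y = -\<infinity> then M else r y)" for y
      have cdec: "\<forall>i j. i \<le> j \<longrightarrow> j < n \<longrightarrow> c (\<sigma> j) \<le> c (\<sigma> i)"
      proof (intro allI impI)
        fix i j assume ij: "i \<le> j" "j < n"
        then have le: "a (\<sigma> j) \<le> a (\<sigma> i)" using sdec by auto
        have fi: "a (\<sigma> i) \<noteq> \<infinity>" "a (\<sigma> j) \<noteq> \<infinity>" using fin a_def in\<sigma> ij by auto
        have Mi: "a (\<sigma> i) \<noteq> -\<infinity> \<Longrightarrow> M \<le> r (\<sigma> i)" using M in\<sigma> ij by auto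
        show "c (\<sigma> j) \<le> c (\<sigma> i)"
          using le fi Mi unfolding c_def r_def
          by (cases "a (\<sigma> i)"; cases "a (\<sigma> j)") auto
      qed
      have "(\<Sum>y<n. (\<Sum>z<n. B y z * lam z) * c y) \<le> (\<Sum>k<n. lam k * c (\<sigma> k))"
        by (rule rearr[OF sp cdec ldec lnn Bnn rows cols])
      moreover have "(\<Sum>y<n. (\<Sum>z<n. B y z * lam z) * c y) = L"
        unfolding L_def using w F by (intro sum.cong) (auto simp: c_def r_def)
      moreover have "R0 + M * W = (\<Sum>k<n. lam k * c (\<sigma> k))"
      proof -
        have "R0 + M * W = (\<Sum>k<n. lam k * r (\<sigma> k) + M * (if a (\<sigma> k) = -\<infinity> then lam k else 0))"
          unfolding R0_def W_def by (simp add: sum.distrib sum_distrib_left)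
        also have "\<dots> = (\<Sum>k<n. lam k * c (\<sigma> k))"
          by (intro sum.cong) (auto simp: c_def r_def)
        finally show ?thesis .
      qed
      ultimately show ?thesis by linarith
    qed
    define K where "K = (\<Sum>y<n. \<bar>r y\<bar>) + \<bar>L\<bar> + \<bar>R0\<bar> + 1"
    have S0: "0 \<le> (\<Sum>y<n. \<bar>r y\<bar>)" by (intro sum_nonneg) auto
    have Kr: "\<And>y. y < n \<Longrightarrow> \<bar>r y\<bar> \<le> K - 1 - \<bar>L\<bar> - \<bar>R0\<bar>"
      unfolding K_def by (auto intro!: member_le_sum)
    have W0: "0 \<le> W" unfolding W_def using lnn by (intro sum_nonneg) auto
    have W1: "W \<le> 1"
    proof -
      have "W \<le> (\<Sum>k<n. lam k)" unfolding W_def using lnn by (intro sum_mono) auto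
      then show ?thesis using lsum by simp
    qed
    show ?thesis
    proof (cases "W = 0")
      case True
      have "L \<le> R0 + (-K) * W"
      proof (rule key, intro allI impI)
        fix y assume "y < n" "a y \<noteq> -\<infinity>"
        then have "\<bar>r y\<bar> \<le> K - 1 - \<bar>L\<bar> - \<bar>R0\<bar>" using Kr by auto
        then show "- K \<le> r y" by linarith
      qed
      then have LR: "L \<le> R0" using True by simp
      have zz: "(\<Sum>k<n. if a (\<sigma> k) = -\<infinity> then lam k else 0) = 0 \<longleftrightarrow>
          (\<forall>k\<in>{..<n}. (if a (\<sigma> k) = -\<infinity> then lam k else 0) = 0)"
        by (rule sum_nonneg_eq_0_iff) (use lnn in auto)
      have z: "\<forall>k\<in>{..<n}. (if a (\<sigma> k) = -\<infinity> then lam k else 0) = 0"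
        using True zz unfolding W_def by simp
      have "RHS = (\<Sum>k<n. ereal (lam k * r (\<sigma> k)))"
        unfolding RHS_def
      proof (intro sum.cong refl)
        fix k assume k: "k \<in> {..<n}"
        show "(if lam k = 0 then 0 else ereal (lam k) * a (\<sigma> k)) = ereal (lam k * r (\<sigma> k))"
        proof (cases "lam k = 0")
          case False
          then have "a (\<sigma> k) \<noteq> -\<infinity>" using z k by force
          moreover have "a (\<sigma> k) \<noteq> \<infinity>" using fin a_def in\<sigma> k by auto
          ultimately show ?thesis using False unfolding r_def by (cases "a (\<sigma> k)") auto
        qed simp
      qed
      then have "RHS = ereal R0" unfolding R0_def by (simp add: sum_ereal)
      then show ?thesis using lhs rhs tp LR by auto
    next
      case False
      then have Wp: "0 < W" using W0 by auto
      define M where "M = - K / W"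
      have Kp: "1 \<le> K" unfolding K_def using S0 by simp
      have "K \<le> K / W" using Wp W1 Kp by (simp add: le_divide_eq)
      then have MK: "M \<le> - K" unfolding M_def by simp
      have "L \<le> R0 + M * W"
      proof (rule key, intro allI impI)
        fix y assume "y < n" "a y \<noteq> -\<infinity>"
        then have "\<bar>r y\<bar> \<le> K - 1 - \<bar>L\<bar> - \<bar>R0\<bar>" using Kr by auto
        then show "M \<le> r y" using MK by linarith
      qed
      moreover have "M * W = - K" using Wp unfolding M_def by simp
      ultimately have "L \<le> R0 - K" by simp
      then have False unfolding K_def using S0 by linarith
      then show ?thesis ..
    qed
  qed
qed




definition onb :: "nat \<Rightarrow> (nat \<Rightarrow> complex vec) \<Rightarrow> bool" where
  "onb n x \<longleftrightarrow> (\<forall>y<n. x y \<in> carrier_vec n) \<and>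
     (\<forall>y<n. \<forall>z<n. (\<Sum>i<n. x y $ i * cnj (x z $ i)) = (if y = z then 1 else 0))"

definition ci :: "nat \<Rightarrow> complex vec \<Rightarrow> complex vec \<Rightarrow> complex" where
  "ci n u v = (\<Sum>i<n. u $ i * cnj (v $ i))"

definition rep :: "nat \<Rightarrow> (nat \<Rightarrow> complex vec) \<Rightarrow> (nat \<Rightarrow> real) \<Rightarrow> complex mat" where
  "rep n x l = mat n n (\<lambda>(i,j). \<Sum>y<n. complex_of_real (l y) * (x y $ i * cnj (x y $ j)))"

definition quad :: "nat \<Rightarrow> complex vec \<Rightarrow> complex mat \<Rightarrow> complex" where
  "quad n v A = (\<Sum>i<n. \<Sum>j<n. cnj (v $ i) * A $$ (i,j) * v $ j)"

lemma cip_eq: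
  assumes "u \<in> carrier_vec n" "v \<in> carrier_vec n"
  shows "u \<bullet>c v = ci n u v"
  using assms unfolding ci_def scalar_prod_def by (auto simp: atLeast0LessThan intro!: sum.cong)

lemma onb_eig:
  assumes "ordered_eigenbasis n \<rho> x" shows "onb n x"
proof -
  have c: "\<forall>y<n. x y \<in> carrier_vec n" using assms unfolding ordered_eigenbasis_def by auto
  then show ?thesis using assms cip_eq unfolding ordered_eigenbasis_def onb_def ci_def by metis
qed

lemma mult_entry:
  assumes "A \<in> carrier_mat m k" "B \<in> carrier_mat k l" "i < m" "j < l"
  shows "(A * B) $$ (i,j) = (\<Sum>t<k. A $$ (i,t) * B $$ (t,j))"
  using assms by (auto simp: scalar_prod_def atLeast0LessThan intro!: sum.cong)

lemma onb_complete:
  assumes o: "onb n x" and i: "i < n" and j: "j < n"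
  shows "(\<Sum>y<n. x y $ i * cnj (x y $ j)) = (if i = j then 1 else 0)"
proof -
  define U where "U = mat n n (\<lambda>(i,y). x y $ i)"
  define A where "A = mat n n (\<lambda>(y,i). cnj (x y $ i))"
  have U: "U \<in> carrier_mat n n" and A: "A \<in> carrier_mat n n" unfolding U_def A_def by auto
  have "A * U = 1\<^sub>m n"
  proof (rule eq_matI)
    fix y z assume "y < dim_row (1\<^sub>m n)" "z < dim_col (1\<^sub>m n)"
    then have yz: "y < n" "z < n" by auto
    have "(A * U) $$ (y,z) = (\<Sum>t<n. cnj (x y $ t) * x z $ t)"
      using mult_entry[OF A U yz] unfolding A_def U_def using yz by (auto intro!: sum.cong)
    also have "\<dots> = (\<Sum>t<n. x z $ t * cnj (x y $ t))" by (simp add: mult.commute)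
    also have "\<dots> = (if z = y then 1 else 0)" using o yz unfolding onb_def by auto
    finally show "(A * U) $$ (y,z) = 1\<^sub>m n $$ (y,z)" using yz by auto
  qed (use A U in auto)
  then have "U * A = 1\<^sub>m n" by (rule mat_mult_left_right_inverse[OF A U])
  then have "(U * A) $$ (i,j) = (if i = j then 1 else 0)" using i j by auto
  moreover have "(U * A) $$ (i,j) = (\<Sum>y<n. x y $ i * cnj (x y $ j))"
    using mult_entry[OF U A i j] unfolding A_def U_def using i j by (auto intro!: sum.cong)
  ultimately show ?thesis by simp
qed

lemma rep_carrier[simp]: "rep n x l \<in> carrier_mat n n" unfolding rep_def by auto

lemma rep_dim[simp]: "dim_row (rep n x l) = n" "dim_col (rep n x l) = n" unfolding rep_def by auto

lemma nsq: "cnj z * z = complex_of_real ((cmod z)\<^sup>2)"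
  by (metis complex_norm_square mult.commute)

lemma nsq2: "z * cnj z = complex_of_real ((cmod z)\<^sup>2)"
  by (metis complex_norm_square)

lemma rep_entry: "i < n \<Longrightarrow> j < n \<Longrightarrow>
   rep n x l $$ (i,j) = (\<Sum>y<n. complex_of_real (l y) * (x y $ i * cnj (x y $ j)))"
  unfolding rep_def by auto

lemma eig_rep:
  assumes "ordered_eigenbasis n \<rho> x" "\<rho> \<in> carrier_mat n n"
  shows "\<rho> = rep n x (eigvals n \<rho>)"
proof (rule eq_matI)
  fix i j assume "i < dim_row (rep n x (eigvals n \<rho>))" "j < dim_col (rep n x (eigvals n \<rho>))"
  then have ij: "i < n" "j < n" by (auto simp: rep_def)
  have o: "\<And>y. y < n \<Longrightarrow> outer (x y) $$ (i,j) = x y $ i * cnj (x y $ j)"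
    using assms(1) ij unfolding ordered_eigenbasis_def outer_def by auto
  have "\<rho> $$ (i,j) = (\<Sum>y<n. complex_of_real (eigvals n \<rho> y) * outer (x y) $$ (i,j))"
    using assms(1) ij unfolding ordered_eigenbasis_def by auto
  also have "\<dots> = rep n x (eigvals n \<rho>) $$ (i,j)"
    unfolding rep_entry[OF ij] using o by (auto intro!: sum.cong)
  finally show "\<rho> $$ (i,j) = rep n x (eigvals n \<rho>) $$ (i,j)" .
qed (use assms(2) in auto)

lemma quad_rep:
  "quad n v (rep n x l) = (\<Sum>y<n. complex_of_real (l y) * complex_of_real ((cmod (ci n v (x y)))\<^sup>2))"
proof -
  define F where "F i j y = complex_of_real (l y) * (cnj (v $ i) * x y $ i) * (cnj (x y $ j) * v $ j)" for i j y
  have "quad n v (rep n x l) = (\<Sum>i<n. \<Sum>j<n. \<Sum>y<n. F i j y)"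
    unfolding quad_def F_def by (auto intro!: sum.cong simp: rep_entry sum_distrib_left sum_distrib_right mult_ac)
  also have "\<dots> = (\<Sum>i<n. \<Sum>y<n. \<Sum>j<n. F i j y)" by (rule sum.cong[OF refl], rule sum.swap)
  also have "\<dots> = (\<Sum>y<n. \<Sum>i<n. \<Sum>j<n. F i j y)" by (rule sum.swap)
  also have "\<dots> = (\<Sum>y<n. complex_of_real (l y) * ((\<Sum>i<n. cnj (v $ i) * x y $ i) * (\<Sum>j<n. cnj (x y $ j) * v $ j)))"
    unfolding F_def by (simp add: sum_distrib_left sum_distrib_right mult_ac)
  also have "\<dots> = (\<Sum>y<n. complex_of_real (l y) * (cnj (ci n v (x y)) * ci n v (x y)))"
    unfolding ci_def by (simp add: cnj_sum mult.commute)
  also have "\<dots> = (\<Sum>y<n. complex_of_real (l y) * complex_of_real ((cmod (ci n v (x y)))\<^sup>2))"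
    by (simp only: nsq)
  finally show ?thesis .
qed

lemma onb_ci:
  assumes "onb n x" "y < n" "z < n"
  shows "ci n (x y) (x z) = (if y = z then 1 else 0)"
  using assms unfolding onb_def ci_def by auto

lemma quad_rep_basis:
  assumes o: "onb n x" and z: "z < n"
  shows "quad n (x z) (rep n x l) = complex_of_real (l z)"
proof -
  have "quad n (x z) (rep n x l) = (\<Sum>y<n. if y = z then complex_of_real (l y) else 0)"
    unfolding quad_rep using onb_ci[OF o z] by (intro sum.cong) auto
  then show ?thesis using z by simp
qed

lemma adj_entry:
  assumes "A \<in> carrier_mat m k"
  shows "mat_adjoint A \<in> carrier_mat k m" "\<And>i j. i < k \<Longrightarrow> j < m \<Longrightarrow> mat_adjoint A $$ (i,j) = cnj (A $$ (j,i))"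
  using assms unfolding mat_adjoint_def mat_of_rows_def by auto

lemma outer_carrier: "v \<in> carrier_vec n \<Longrightarrow> outer v \<in> carrier_mat n n"
  unfolding outer_def by auto

lemma outer_entry: "v \<in> carrier_vec n \<Longrightarrow> i < n \<Longrightarrow> j < n \<Longrightarrow> outer v $$ (i,j) = v $ i * cnj (v $ j)"
  unfolding outer_def by auto

lemma adj_outer:
  assumes v: "v \<in> carrier_vec n"
  shows "mat_adjoint (outer v) = outer v"
proof (rule eq_matI)
  fix i j assume "i < dim_row (outer v)" "j < dim_col (outer v)"
  then have ij: "i < n" "j < n" using outer_carrier[OF v] by auto
  show "mat_adjoint (outer v) $$ (i,j) = outer v $$ (i,j)"
    using adj_entry(2)[OF outer_carrier[OF v] ij] outer_entry[OF v] ij by (simp add: mult.commute)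
qed (use adj_entry(1)[OF outer_carrier[OF v]] outer_carrier[OF v] in auto)

lemma hs_outer:
  assumes v: "v \<in> carrier_vec n" and A: "A \<in> carrier_mat n n"
  shows "hs_inner (outer v) A = quad n v A"
proof -
  have O: "outer v \<in> carrier_mat n n" by (rule outer_carrier[OF v])
  have "hs_inner (outer v) A = (\<Sum>i<n. (outer v * A) $$ (i,i))"
    unfolding hs_inner_def mtrace_def adj_outer[OF v] using O by auto
  also have "\<dots> = (\<Sum>i<n. \<Sum>t<n. v $ i * cnj (v $ t) * A $$ (t,i))"
    using mult_entry[OF O A] outer_entry[OF v] by (auto intro!: sum.cong)
  also have "\<dots> = (\<Sum>t<n. \<Sum>i<n. v $ i * cnj (v $ t) * A $$ (t,i))" by (rule sum.swap)
  also have "\<dots> = quad n v A" unfolding quad_def by (auto intro!: sum.cong simp: mult_ac)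
  finally show ?thesis .
qed

lemma psd_quad:
  assumes v: "v \<in> carrier_vec n" and A: "A \<in> carrier_mat n n"
  shows "v \<bullet>c (A *\<^sub>v v) = cnj (quad n v A)"
proof -
  have Av: "A *\<^sub>v v \<in> carrier_vec n" using A v by auto
  have e: "\<And>i. i < n \<Longrightarrow> (A *\<^sub>v v) $ i = (\<Sum>j<n. A $$ (i,j) * v $ j)"
    using A v by (auto simp: scalar_prod_def atLeast0LessThan intro!: sum.cong)
  have "v \<bullet>c (A *\<^sub>v v) = (\<Sum>i<n. v $ i * cnj (\<Sum>j<n. A $$ (i,j) * v $ j))"
    unfolding cip_eq[OF v Av] ci_def using e by (auto intro!: sum.cong)
  also have "\<dots> = cnj (quad n v A)"
    unfolding quad_def by (simp add: cnj_sum sum_distrib_left mult_ac)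
  finally show ?thesis .
qed

lemma trace_rep:
  assumes o: "onb n x"
  shows "mtrace (rep n x l) = (\<Sum>y<n. complex_of_real (l y))"
proof -
  have "mtrace (rep n x l) = (\<Sum>i<n. \<Sum>y<n. complex_of_real (l y) * (x y $ i * cnj (x y $ i)))"
    unfolding mtrace_def by (auto simp: rep_entry intro!: sum.cong)
  also have "\<dots> = (\<Sum>y<n. \<Sum>i<n. complex_of_real (l y) * (x y $ i * cnj (x y $ i)))" by (rule sum.swap)
  also have "\<dots> = (\<Sum>y<n. complex_of_real (l y) * (\<Sum>i<n. x y $ i * cnj (x y $ i)))"
    by (simp add: sum_distrib_left)
  also have "\<dots> = (\<Sum>y<n. complex_of_real (l y))"
    using o unfolding onb_def by (auto intro!: sum.cong)
  finally show ?thesis .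
qed

lemma adj_rep: "mat_adjoint (rep n x l) = rep n x l"
proof (rule eq_matI)
  fix i j assume "i < dim_row (rep n x l)" "j < dim_col (rep n x l)"
  then have ij: "i < n" "j < n" by auto
  show "mat_adjoint (rep n x l) $$ (i,j) = rep n x l $$ (i,j)"
    using adj_entry(2)[OF rep_carrier ij(1) ij(2)] ij
    by (simp add: rep_entry cnj_sum mult_ac)
qed (use adj_entry(1)[OF rep_carrier] in auto)

lemma prod_upt: "prod_list (map f [0..<n]) = (\<Prod>i<n. f i)"
  using prod.distinct_set_conv_list[of "[0..<n]" f] by (simp add: atLeast0LessThan)

lemma char_rep:
  assumes o: "onb n x"
  shows "char_poly (rep n x l) = (\<Prod>i<n. [:- complex_of_real (l i), 1:])"
proof -
  define U where "U = mat n n (\<lambda>(i,y). x y $ i)"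
  define A where "A = mat n n (\<lambda>(y,i). cnj (x y $ i))"
  define D where "D = mat n n (\<lambda>(i,j). if i = j then complex_of_real (l i) else 0)"
  have U: "U \<in> carrier_mat n n" and A: "A \<in> carrier_mat n n" and D: "D \<in> carrier_mat n n"
    unfolding U_def A_def D_def by auto
  have UA: "U * A = 1\<^sub>m n"
  proof (rule eq_matI)
    fix i j assume "i < dim_row (1\<^sub>m n)" "j < dim_col (1\<^sub>m n)"
    then have ij: "i < n" "j < n" by auto
    have "(U * A) $$ (i,j) = (\<Sum>y<n. x y $ i * cnj (x y $ j))"
      using mult_entry[OF U A ij] unfolding A_def U_def using ij by (auto intro!: sum.cong)
    then show "(U * A) $$ (i,j) = 1\<^sub>m n $$ (i,j)" using onb_complete[OF o ij] ij by auto
  qed (use U A in auto)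
  have AU: "A * U = 1\<^sub>m n" by (rule mat_mult_left_right_inverse[OF U A UA])
  have UD: "U * D \<in> carrier_mat n n" using U D by auto
  have eq: "rep n x l = U * D * A"
  proof (rule eq_matI)
    fix i j assume "i < dim_row (U * D * A)" "j < dim_col (U * D * A)"
    then have ij: "i < n" "j < n" using U A D by auto
    have ud: "(U * D) $$ (i,k) = x k $ i * complex_of_real (l k)" if k: "k < n" for k
    proof -
      have "(U * D) $$ (i,k) = (\<Sum>t<n. x t $ i * (if t = k then complex_of_real (l t) else 0))"
        using mult_entry[OF U D ij(1) k] unfolding U_def D_def using ij k by (auto intro!: sum.cong)
      also have "\<dots> = (\<Sum>t<n. if t = k then x t $ i * complex_of_real (l t) else 0)"
        by (intro sum.cong) auto
      finally show ?thesis using k by simp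
    qed
    have "(U * D * A) $$ (i,j) = (\<Sum>k<n. x k $ i * complex_of_real (l k) * cnj (x k $ j))"
      using mult_entry[OF UD A ij] ud unfolding A_def using ij by (auto intro!: sum.cong)
    then show "rep n x l $$ (i,j) = (U * D * A) $$ (i,j)"
      using ij by (simp add: rep_entry mult_ac)
  qed (use U A D in auto)
  have "{rep n x l, D, U, A} \<subseteq> carrier_mat n n" using U A D by auto
  then have "similar_mat (rep n x l) D" by (rule similar_matI[OF _ UA AU eq])
  then have "char_poly (rep n x l) = char_poly D" by (rule char_poly_similar)
  also have "\<dots> = prod_list (map (\<lambda>a. [:- a, 1:]) (diag_mat D))"
    by (rule char_poly_upper_triangular[OF D]) (auto simp: upper_triangular_def D_def)
  also have "diag_mat D = map (\<lambda>i. complex_of_real (l i)) [0..<n]"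
    unfolding diag_mat_def D_def by auto
  finally show ?thesis by (simp add: prod_upt comp_def)
qed

lemma parseval:
  assumes o: "onb n x" and v: "v \<in> carrier_vec n"
  shows "(\<Sum>y<n. (cmod (ci n v (x y)))\<^sup>2) = (\<Sum>i<n. (cmod (v $ i))\<^sup>2)"
proof -
  define F where "F y i j = v $ j * (cnj (v $ i) * (x y $ i * cnj (x y $ j)))" for y i j
  have "complex_of_real (\<Sum>y<n. (cmod (ci n v (x y)))\<^sup>2) = (\<Sum>y<n. ci n v (x y) * cnj (ci n v (x y)))"
    by (simp only: of_real_sum nsq2)
  also have "\<dots> = (\<Sum>y<n. \<Sum>i<n. \<Sum>j<n. F y i j)"
    unfolding ci_def F_def by (simp add: cnj_sum sum_distrib_left sum_distrib_right mult_ac)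
  also have "\<dots> = (\<Sum>i<n. \<Sum>y<n. \<Sum>j<n. F y i j)" by (rule sum.swap)
  also have "\<dots> = (\<Sum>i<n. \<Sum>j<n. \<Sum>y<n. F y i j)" by (rule sum.cong[OF refl], rule sum.swap)
  also have "\<dots> = (\<Sum>i<n. \<Sum>j<n. v $ j * cnj (v $ i) * (\<Sum>y<n. x y $ i * cnj (x y $ j)))"
    unfolding F_def by (simp add: sum_distrib_left mult_ac)
  also have "\<dots> = (\<Sum>i<n. \<Sum>j<n. if i = j then v $ j * cnj (v $ i) else 0)"
    using onb_complete[OF o] by (intro sum.cong refl) auto
  also have "\<dots> = (\<Sum>i<n. v $ i * cnj (v $ i))" by simp
  also have "\<dots> = complex_of_real (\<Sum>i<n. (cmod (v $ i))\<^sup>2)"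
    by (simp only: of_real_sum nsq2)
  finally show ?thesis by (simp only: of_real_eq_iff)
qed

lemma expansion:
  assumes o: "onb n x" and v: "v \<in> carrier_vec n" and i: "i < n"
  shows "(\<Sum>y<n. ci n v (x y) * x y $ i) = v $ i"
proof -
  have "(\<Sum>y<n. ci n v (x y) * x y $ i) = (\<Sum>y<n. \<Sum>j<n. v $ j * (x y $ i * cnj (x y $ j)))"
    unfolding ci_def sum_distrib_right by (intro sum.cong refl) (simp add: mult_ac)
  also have "\<dots> = (\<Sum>j<n. \<Sum>y<n. v $ j * (x y $ i * cnj (x y $ j)))" by (rule sum.swap)
  also have "\<dots> = (\<Sum>j<n. v $ j * (\<Sum>y<n. x y $ i * cnj (x y $ j)))" by (simp add: sum_distrib_left)
  also have "\<dots> = (\<Sum>j<n. if i = j then v $ j else 0)"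
    using onb_complete[OF o i] by (intro sum.cong) auto
  finally show ?thesis using i by simp
qed

lemma rep_apply:
  assumes i: "i < n"
  shows "(\<Sum>j<n. rep n x l $$ (i,j) * v $ j) = (\<Sum>y<n. complex_of_real (l y) * x y $ i * ci n v (x y))"
proof -
  have "(\<Sum>j<n. rep n x l $$ (i,j) * v $ j) = (\<Sum>j<n. \<Sum>y<n. complex_of_real (l y) * x y $ i * (v $ j * cnj (x y $ j)))"
    using i by (auto simp: rep_entry sum_distrib_left sum_distrib_right mult_ac intro!: sum.cong)
  also have "\<dots> = (\<Sum>y<n. \<Sum>j<n. complex_of_real (l y) * x y $ i * (v $ j * cnj (x y $ j)))" by (rule sum.swap)
  also have "\<dots> = (\<Sum>y<n. complex_of_real (l y) * x y $ i * ci n v (x y))"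
    unfolding ci_def by (simp add: sum_distrib_left)
  finally show ?thesis .
qed

lemma reconstruct:
  assumes o: "onb n x" and A: "A \<in> carrier_mat n n"
    and ev: "\<forall>y<n. \<forall>i<n. (\<Sum>j<n. A $$ (i,j) * x y $ j) = complex_of_real (l y) * x y $ i"
  shows "A = rep n x l"
proof (rule eq_matI)
  fix i j assume "i < dim_row (rep n x l)" "j < dim_col (rep n x l)"
  then have ij: "i < n" "j < n" by auto
  have "A $$ (i,j) = (\<Sum>k<n. if k = j then A $$ (i,k) else 0)" using ij by simp
  also have "\<dots> = (\<Sum>k<n. A $$ (i,k) * (\<Sum>y<n. x y $ k * cnj (x y $ j)))"
    using onb_complete[OF o _ ij(2)] by (intro sum.cong) auto
  also have "\<dots> = (\<Sum>k<n. \<Sum>y<n. A $$ (i,k) * x y $ k * cnj (x y $ j))"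
    by (simp add: sum_distrib_left mult_ac)
  also have "\<dots> = (\<Sum>y<n. \<Sum>k<n. A $$ (i,k) * x y $ k * cnj (x y $ j))" by (rule sum.swap)
  also have "\<dots> = (\<Sum>y<n. (\<Sum>k<n. A $$ (i,k) * x y $ k) * cnj (x y $ j))"
    by (simp add: sum_distrib_right)
  also have "\<dots> = (\<Sum>y<n. complex_of_real (l y) * x y $ i * cnj (x y $ j))"
    using ev ij by (intro sum.cong) auto
  also have "\<dots> = rep n x l $$ (i,j)" using ij by (simp add: rep_entry mult_ac)
  finally show "A $$ (i,j) = rep n x l $$ (i,j)" .
qed (use A in auto)

lemma rep_dens:
  assumes o: "onb n x" and nn: "\<forall>y<n. 0 \<le> l y" and s1: "(\<Sum>y<n. l y) = 1"
  shows "rep n x l \<in> Dens n"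
proof -
  have psd: "0 \<le> Re (v \<bullet>c (rep n x l *\<^sub>v v))" if v: "v \<in> carrier_vec n" for v
  proof -
    have "Re (v \<bullet>c (rep n x l *\<^sub>v v)) = (\<Sum>y<n. l y * (cmod (ci n v (x y)))\<^sup>2)"
      unfolding psd_quad[OF v rep_carrier] quad_rep by (simp add: Re_sum)
    also have "\<dots> \<ge> 0" using nn by (intro sum_nonneg) auto
    finally show ?thesis by simp
  qed
  have "mtrace (rep n x l) = complex_of_real (\<Sum>y<n. l y)" unfolding trace_rep[OF o] by simp
  then have "mtrace (rep n x l) = 1" using s1 by simp
  then show ?thesis unfolding Dens_def using psd adj_rep by auto
qed

lemma unit_onb: "onb n (\<lambda>y. unit_vec n y)"
proof -
  have "(\<Sum>i<n. unit_vec n y $ i * cnj (unit_vec n z $ i)) = (if y = z then 1 else 0)"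
    if "y < n" "z < n" for y z
  proof -
    have "(\<Sum>i<n. unit_vec n y $ i * cnj (unit_vec n z $ i)) = (\<Sum>i<n. if i = y then (if y = z then 1 else 0) else 0)"
      by (intro sum.cong) (auto simp: unit_vec_def)
    then show ?thesis using that by simp
  qed
  then show ?thesis unfolding onb_def by auto
qed




lemma onb_carrier: "onb n x \<Longrightarrow> y < n \<Longrightarrow> x y \<in> carrier_vec n"
  unfolding onb_def by simp

lemma onb_orth: "onb n x \<Longrightarrow> y < n \<Longrightarrow> z < n \<Longrightarrow> (\<Sum>i<n. x y $ i * cnj (x z $ i)) = (if y = z then 1 else 0)"
  unfolding onb_def by simp

lemma root_iff:
  fixes m :: nat and f :: "nat \<Rightarrow> real"
  shows "poly (\<Prod>i<m. [:- complex_of_real (f i), 1:]) (complex_of_real a) = 0 \<longleftrightarrow> (\<exists>i<m. a = f i)"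
  by (auto simp: poly_prod)

lemma roots_unique:
  fixes l1 l2 :: "nat \<Rightarrow> real"
  assumes "\<forall>i\<ge>n. l1 i = 0" "\<forall>i\<ge>n. l2 i = 0"
    "\<forall>i j. i \<le> j \<longrightarrow> j < n \<longrightarrow> l1 j \<le> l1 i" "\<forall>i j. i \<le> j \<longrightarrow> j < n \<longrightarrow> l2 j \<le> l2 i"
    "(\<Prod>i<n. [:- complex_of_real (l1 i), 1:]) = (\<Prod>i<n. [:- complex_of_real (l2 i), 1:])"
  shows "l1 = l2"
  using assms
proof (induction n arbitrary: l1 l2)
  case 0 then show ?case by auto
next
  case (Suc n)
  have r1: "\<exists>i<Suc n. l1 0 = l2 i"
    using Suc.prems(5) root_iff[where m="Suc n" and f=l1 and a="l1 0"] root_iff[where m="Suc n" and f=l2 and a="l1 0"] by auto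
  have r2: "\<exists>i<Suc n. l2 0 = l1 i"
    using Suc.prems(5) root_iff[where m="Suc n" and f=l1 and a="l2 0"] root_iff[where m="Suc n" and f=l2 and a="l2 0"] by auto
  have e0: "l1 0 = l2 0"
  proof -
    from r1 obtain i where "i < Suc n" "l1 0 = l2 i" by blast
    then have "l1 0 \<le> l2 0" using Suc.prems(4) by auto
    moreover from r2 obtain j where "j < Suc n" "l2 0 = l1 j" by blast
    then have "l2 0 \<le> l1 0" using Suc.prems(3) by auto
    ultimately show ?thesis by simp
  qed
  have "[:- complex_of_real (l1 0), 1:] * (\<Prod>i<n. [:- complex_of_real (l1 (Suc i)), 1:]) =
        [:- complex_of_real (l1 0), 1:] * (\<Prod>i<n. [:- complex_of_real (l2 (Suc i)), 1:])"
    using Suc.prems(5) unfolding prod.lessThan_Suc_shift e0 .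
  moreover have nz: "[:- complex_of_real (l1 0), 1:] \<noteq> 0" by simp
  ultimately have "(\<Prod>i<n. [:- complex_of_real (l1 (Suc i)), 1:]) = (\<Prod>i<n. [:- complex_of_real (l2 (Suc i)), 1:])"
    using mult_left_cancel[OF nz] by blast
  then have "(\<lambda>i. l1 (Suc i)) = (\<lambda>i. l2 (Suc i))"
    using Suc.prems by (intro Suc.IH) auto
  then have S: "\<And>k. l1 (Suc k) = l2 (Suc k)" by (simp add: fun_eq_iff)
  show ?case
  proof
    fix i show "l1 i = l2 i" using e0 S by (cases i) auto
  qed
qed

lemma eig_eq:
  assumes "\<forall>i\<ge>n. l i = 0" "\<forall>i j. i \<le> j \<longrightarrow> j < n \<longrightarrow> l j \<le> l i"
    "char_poly \<rho> = (\<Prod>i<n. [:- complex_of_real (l i), 1:])"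
  shows "eigvals n \<rho> = l"
  unfolding eigvals_def
proof (rule the_equality)
  show "(\<forall>i\<ge>n. l i = 0) \<and> (\<forall>i j. i \<le> j \<longrightarrow> j < n \<longrightarrow> l j \<le> l i) \<and>
        char_poly \<rho> = (\<Prod>i<n. [:- complex_of_real (l i), 1:])" using assms by auto
  fix l' assume H: "(\<forall>i\<ge>n. l' i = 0) \<and> (\<forall>i j. i \<le> j \<longrightarrow> j < n \<longrightarrow> l' j \<le> l' i) \<and>
        char_poly \<rho> = (\<Prod>i<n. [:- complex_of_real (l' i), 1:])"
  then have a1: "\<forall>i\<ge>n. l' i = 0" and a2: "\<forall>i j. i \<le> j \<longrightarrow> j < n \<longrightarrow> l' j \<le> l' i"
    and a3: "char_poly \<rho> = (\<Prod>i<n. [:- complex_of_real (l' i), 1:])" by blast+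
  have eqP: "(\<Prod>i<n. [:- complex_of_real (l' i), 1:]) = (\<Prod>i<n. [:- complex_of_real (l i), 1:])"
    using a3 assms(3) by (rule trans[OF sym])
  show "l' = l" by (rule roots_unique[OF a1 assms(1) a2 assms(2) eqP])
qed

lemma eig_rep_spec:
  assumes o: "onb n x"
  shows "(\<forall>i\<ge>n. eigvals n (rep n x l) i = 0) \<and>
    (\<forall>i j. i \<le> j \<longrightarrow> j < n \<longrightarrow> eigvals n (rep n x l) j \<le> eigvals n (rep n x l) i)"
proof -
  obtain \<sigma> where sp: "\<sigma> permutes {..<n}" and dec: "\<forall>i j. i \<le> j \<longrightarrow> j < n \<longrightarrow> l (\<sigma> j) \<le> l (\<sigma> i)"
    using sort_perm[of n l] by blast
  define ls where "ls i = (if i < n then l (\<sigma> i) else 0)" for i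
  have "(\<Prod>i<n. [:- complex_of_real (ls i), 1:]) = (\<Prod>i<n. [:- complex_of_real (l (\<sigma> i)), 1:])"
    by (intro prod.cong) (auto simp: ls_def)
  also have "\<dots> = (\<Prod>i<n. [:- complex_of_real (l i), 1:])"
    using prod.permute[OF sp, of "\<lambda>i. [:- complex_of_real (l i), 1:]"] by (simp add: comp_def)
  finally have cp: "char_poly (rep n x l) = (\<Prod>i<n. [:- complex_of_real (ls i), 1:])"
    using char_rep[OF o] by simp
  have "eigvals n (rep n x l) = ls" by (rule eig_eq) (use cp dec in \<open>auto simp: ls_def\<close>)
  then show ?thesis using dec by (auto simp: ls_def)
qed

lemma onb_norm:
  assumes o: "onb n x" and y: "y < n"
  shows "(\<Sum>i<n. (cmod (x y $ i))\<^sup>2) = 1"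
proof -
  have "complex_of_real (\<Sum>i<n. (cmod (x y $ i))\<^sup>2) = (\<Sum>i<n. x y $ i * cnj (x y $ i))"
    by (simp only: of_real_sum nsq2)
  also have "\<dots> = 1" using onb_orth[OF o y y] by simp
  finally show ?thesis by (metis of_real_eq_1_iff)
qed

lemma dens_basis:
  assumes sm: "spectral_measurement n \<mu>" and r: "\<rho> \<in> Dens n"
  obtains x where "onb n x" "\<forall>y<n. \<mu> \<rho> y = outer (x y)" "\<rho> = rep n x (eigvals n \<rho>)"
    "eigvals n \<rho> \<in> simplex n" "\<forall>i j. i \<le> j \<longrightarrow> j < n \<longrightarrow> eigvals n \<rho> j \<le> eigvals n \<rho> i"
proof -
  obtain x where oe: "ordered_eigenbasis n \<rho> x" and mu: "\<forall>y<n. \<mu> \<rho> y = outer (x y)"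
    using sm r unfolding spectral_measurement_def by blast
  have o: "onb n x" by (rule onb_eig[OF oe])
  have rc: "\<rho> \<in> carrier_mat n n" using r unfolding Dens_def by auto
  define l where "l = eigvals n \<rho>"
  have R: "\<rho> = rep n x l" unfolding l_def by (rule eig_rep[OF oe rc])
  have sp: "(\<forall>i\<ge>n. l i = 0) \<and> (\<forall>i j. i \<le> j \<longrightarrow> j < n \<longrightarrow> l j \<le> l i)"
    using eig_rep_spec[OF o, of l] R[symmetric] unfolding l_def by simp
  have nn: "0 \<le> l z" if z: "z < n" for z
  proof -
    have xz: "x z \<in> carrier_vec n" by (rule onb_carrier[OF o z])
    have "0 \<le> Re (x z \<bullet>c (\<rho> *\<^sub>v x z))" using r xz unfolding Dens_def by auto
    also have "x z \<bullet>c (\<rho> *\<^sub>v x z) = cnj (quad n (x z) \<rho>)" by (rule psd_quad[OF xz rc])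
    also have "quad n (x z) \<rho> = complex_of_real (l z)" unfolding R by (rule quad_rep_basis[OF o z])
    finally show ?thesis by simp
  qed
  have "mtrace \<rho> = 1" using r unfolding Dens_def by auto
  then have "complex_of_real (\<Sum>y<n. l y) = 1" unfolding R trace_rep[OF o] by simp
  then have s1: "(\<Sum>y<n. l y) = 1" by (metis of_real_eq_1_iff)
  have ls: "l \<in> simplex n" unfolding simplex_def using sp nn s1 by auto
  have dec: "\<forall>i j. i \<le> j \<longrightarrow> j < n \<longrightarrow> l j \<le> l i" using sp by blast
  from that[OF o mu] R ls dec show ?thesis unfolding l_def by blast
qed

lemma ci_swap: "ci n u v = cnj (ci n v u)"
  unfolding ci_def by (simp add: cnj_sum mult.commute)

lemma spec_eq:
  assumes mu: "\<forall>y<n. \<mu> \<rho>' y = outer (x' y)" and o: "onb n x'" and rc: "\<rho> \<in> carrier_mat n n"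
  shows "spec_exp_score n s \<mu> \<rho>' \<rho> =
    exp_score n s (eigvals n \<rho>') (\<lambda>y. if y < n then Re (quad n (x' y) \<rho>) else 0)"
proof -
  have h: "hs_inner (\<mu> \<rho>' y) \<rho> = quad n (x' y) \<rho>" if y: "y < n" for y
  proof -
    have xc: "x' y \<in> carrier_vec n" by (rule onb_carrier[OF o y])
    have "\<mu> \<rho>' y = outer (x' y)" using mu y by simp
    then show ?thesis using hs_outer[OF xc rc] by simp
  qed
  have e: "\<And>y. y \<in> {..<n} \<Longrightarrow> Re (hs_inner (\<mu> \<rho>' y) \<rho>) = (if y < n then Re (quad n (x' y) \<rho>) else 0)"
    using h by simp
  show ?thesis unfolding spec_exp_score_def exp_score_def Let_def
    by (rule sum.cong[OF refl]) (simp only: e)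
qed

lemma spec_self:
  assumes sm: "spectral_measurement n \<mu>" and r: "\<rho> \<in> Dens n"
  shows "spec_exp_score n s \<mu> \<rho> \<rho> = exp_score n s (eigvals n \<rho>) (eigvals n \<rho>)"
proof -
  obtain x where o: "onb n x" and mu: "\<forall>y<n. \<mu> \<rho> y = outer (x y)" and R: "\<rho> = rep n x (eigvals n \<rho>)"
    and sx: "eigvals n \<rho> \<in> simplex n"
    and "\<forall>i j. i \<le> j \<longrightarrow> j < n \<longrightarrow> eigvals n \<rho> j \<le> eigvals n \<rho> i"
    by (rule dens_basis[OF sm r])
  define l where "l = eigvals n \<rho>"
  have Rl: "\<rho> = rep n x l" using R unfolding l_def .
  have rc: "\<rho> \<in> carrier_mat n n" using r unfolding Dens_def by auto
  have W: "(\<lambda>y. if y < n then Re (quad n (x y) \<rho>) else 0) = l"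
  proof
    fix y show "(if y < n then Re (quad n (x y) \<rho>) else 0) = l y"
    proof (cases "y < n")
      case True
      have "quad n (x y) \<rho> = complex_of_real (l y)" unfolding Rl by (rule quad_rep_basis[OF o True])
      then show ?thesis using True by simp
    next
      case False then show ?thesis using sx unfolding l_def simplex_def by auto
    qed
  qed
  have "spec_exp_score n s \<mu> \<rho> \<rho> = exp_score n s (eigvals n \<rho>) (\<lambda>y. if y < n then Re (quad n (x y) \<rho>) else 0)"
    by (rule spec_eq[of n \<mu> \<rho> x \<rho> s, OF mu o rc])
  then show ?thesis unfolding W l_def .
qed




lemma sp_proper: "strictly_proper n s \<Longrightarrow> proper n s"
  unfolding strictly_proper_def proper_def
proof (intro ballI)
  fix p q assume a: "\<forall>p\<in>simplex n. \<forall>q\<in>simplex n. q \<noteq> p \<longrightarrow> exp_score n s q p < exp_score n s p p"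
    and p: "p \<in> simplex n" and q: "q \<in> simplex n"
  show "exp_score n s q p \<le> exp_score n s p p"
    using a p q by (cases "q = p") (auto intro: less_imp_le)
qed

lemma fwd:
  assumes pi: "perm_invariant n s" and reg: "regular n s" and sm: "spectral_measurement n \<mu>"
    and r: "\<rho> \<in> Dens n" and r': "\<rho>' \<in> Dens n"
  shows "proper n s \<Longrightarrow> spec_exp_score n s \<mu> \<rho>' \<rho> \<le> spec_exp_score n s \<mu> \<rho> \<rho>"
    and "strictly_proper n s \<Longrightarrow> \<rho>' \<noteq> \<rho> \<Longrightarrow> spec_exp_score n s \<mu> \<rho>' \<rho> < spec_exp_score n s \<mu> \<rho> \<rho>"
proof -
  obtain x where o: "onb n x" and mu: "\<forall>y<n. \<mu> \<rho> y = outer (x y)" and R: "\<rho> = rep n x (eigvals n \<rho>)"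
    and ls0: "eigvals n \<rho> \<in> simplex n"
    and ldec0: "\<forall>i j. i \<le> j \<longrightarrow> j < n \<longrightarrow> eigvals n \<rho> j \<le> eigvals n \<rho> i"
    by (rule dens_basis[OF sm r])
  obtain x' where o': "onb n x'" and mu': "\<forall>y<n. \<mu> \<rho>' y = outer (x' y)"
    and R': "\<rho>' = rep n x' (eigvals n \<rho>')" and ls0': "eigvals n \<rho>' \<in> simplex n"
    and "\<forall>i j. i \<le> j \<longrightarrow> j < n \<longrightarrow> eigvals n \<rho>' j \<le> eigvals n \<rho>' i"
    by (rule dens_basis[OF sm r'])
  define lam where "lam = eigvals n \<rho>"
  define lam' where "lam' = eigvals n \<rho>'"
  have Rl: "\<rho> = rep n x lam" using R unfolding lam_def .
  have Rl': "\<rho>' = rep n x' lam'" using R' unfolding lam'_def .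
  have ls: "lam \<in> simplex n" using ls0 unfolding lam_def .
  have ls': "lam' \<in> simplex n" using ls0' unfolding lam'_def .
  have ldec: "\<forall>i j. i \<le> j \<longrightarrow> j < n \<longrightarrow> lam j \<le> lam i" using ldec0 unfolding lam_def .
  have rc: "\<rho> \<in> carrier_mat n n" using r unfolding Dens_def by auto
  define B where "B y z = (cmod (ci n (x' y) (x z)))\<^sup>2" for y z
  define w where "w y = (if y < n then Re (quad n (x' y) \<rho>) else 0)" for y
  have xc: "\<And>y. y < n \<Longrightarrow> x y \<in> carrier_vec n" by (rule onb_carrier[OF o])
  have xc': "\<And>y. y < n \<Longrightarrow> x' y \<in> carrier_vec n" by (rule onb_carrier[OF o'])
  have lnn: "\<forall>z<n. 0 \<le> lam z" and lsum: "(\<Sum>z<n. lam z) = 1"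
    using ls unfolding simplex_def by auto
  have Bnn: "\<forall>y<n. \<forall>z<n. 0 \<le> B y z" unfolding B_def by auto
  have rows: "\<forall>y<n. (\<Sum>z<n. B y z) = 1"
    unfolding B_def using parseval[OF o xc'] onb_norm[OF o'] by auto
  have cols: "\<forall>z<n. (\<Sum>y<n. B y z) = 1"
  proof (intro allI impI)
    fix z assume z: "z < n"
    have "(\<Sum>y<n. B y z) = (\<Sum>y<n. (cmod (ci n (x z) (x' y)))\<^sup>2)"
      unfolding B_def by (subst ci_swap) simp
    also have "\<dots> = 1" using parseval[OF o' xc[OF z]] onb_norm[OF o z] by simp
    finally show "(\<Sum>y<n. B y z) = 1" .
  qed
  have wB: "\<forall>y<n. w y = (\<Sum>z<n. B y z * lam z)"
    unfolding w_def B_def Rl quad_rep by (simp add: Re_sum mult.commute)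
  have wsx: "w \<in> simplex n"
  proof -
    have "\<forall>y<n. 0 \<le> w y" using wB Bnn lnn by (auto intro!: sum_nonneg)
    moreover have "\<forall>y\<ge>n. w y = 0" unfolding w_def by auto
    moreover have "(\<Sum>y<n. w y) = 1"
    proof -
      have "(\<Sum>y<n. w y) = (\<Sum>y<n. \<Sum>z<n. B y z * lam z)" using wB by simp
      also have "\<dots> = (\<Sum>z<n. \<Sum>y<n. B y z * lam z)" by (rule sum.swap)
      also have "\<dots> = (\<Sum>z<n. lam z)"
        by (intro sum.cong refl) (use cols in \<open>simp add: sum_distrib_right[symmetric]\<close>)
      finally show ?thesis using lsum by simp
    qed
    ultimately show ?thesis unfolding simplex_def by auto
  qed
  have specl: "spec_exp_score n s \<mu> \<rho>' \<rho> = exp_score n s lam' w"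
    unfolding w_def lam'_def by (rule spec_eq[of n \<mu> \<rho>' x' \<rho> s, OF mu' o' rc])
  have specr: "spec_exp_score n s \<mu> \<rho> \<rho> = exp_score n s lam lam"
    unfolding lam_def by (rule spec_self[OF sm r])
  have fin: "\<And>q. q \<in> simplex n \<Longrightarrow> \<forall>y<n. s q y \<noteq> \<infinity>" using score_fin[OF reg] by auto
  have core': "\<exists>\<tau>. \<tau> permutes {..<n} \<and> exp_score n s q w \<le> exp_score n s q (lam \<circ> \<tau>)"
    if q: "q \<in> simplex n" for q
    by (rule core[OF ls ldec Bnn rows cols wB]) (rule fin[OF q])
  have bk: "exp_score n s (lam \<circ> \<tau>) (lam \<circ> \<tau>) = exp_score n s lam lam" if tp: "\<tau> permutes {..<n}" for \<tau>
    by (rule exp_perm[OF pi tp ls])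
  have lt_sx: "lam \<circ> \<tau> \<in> simplex n" if tp: "\<tau> permutes {..<n}" for \<tau>
    by (rule simplex_perm[OF tp ls])
  show "proper n s \<Longrightarrow> spec_exp_score n s \<mu> \<rho>' \<rho> \<le> spec_exp_score n s \<mu> \<rho> \<rho>"
  proof -
    assume pr: "proper n s"
    obtain \<tau> where tp: "\<tau> permutes {..<n}"
      and le1: "exp_score n s lam' w \<le> exp_score n s lam' (lam \<circ> \<tau>)"
      using core'[OF ls'] by blast
    have "exp_score n s lam' (lam \<circ> \<tau>) \<le> exp_score n s (lam \<circ> \<tau>) (lam \<circ> \<tau>)"
      using pr lt_sx[OF tp] ls' unfolding proper_def by blast
    then show ?thesis using le1 bk[OF tp] specl specr by simp
  qed
  show "strictly_proper n s \<Longrightarrow> \<rho>' \<noteq> \<rho> \<Longrightarrow> spec_exp_score n s \<mu> \<rho>' \<rho> < spec_exp_score n s \<mu> \<rho> \<rho>"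
  proof -
    assume spr: "strictly_proper n s" and ne: "\<rho>' \<noteq> \<rho>"
    have pr: "proper n s" by (rule sp_proper[OF spr])
    obtain \<tau> where tp: "\<tau> permutes {..<n}" and le1: "exp_score n s w w \<le> exp_score n s w (lam \<circ> \<tau>)"
      using core'[OF wsx] by blast
    have le2': "exp_score n s w (lam \<circ> \<tau>) \<le> exp_score n s (lam \<circ> \<tau>) (lam \<circ> \<tau>)"
      using pr lt_sx[OF tp] wsx unfolding proper_def by blast
    have le2: "exp_score n s w (lam \<circ> \<tau>) \<le> exp_score n s lam lam"
      using le2' bk[OF tp] by simp
    show ?thesis
    proof (cases "lam' = w")
      case False
      have "exp_score n s lam' w < exp_score n s w w"
        using spr wsx ls' False unfolding strictly_proper_def by blast
      then show ?thesis using le1 le2 specl specr by simp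
    next
      case True
      show ?thesis
      proof (cases "w = lam \<circ> \<tau>")
        case False
        have "exp_score n s w (lam \<circ> \<tau>) < exp_score n s (lam \<circ> \<tau>) (lam \<circ> \<tau>)"
          using spr wsx lt_sx[OF tp] False unfolding strictly_proper_def by blast
        then show ?thesis using le1 bk[OF tp] specl specr True by simp
      next
        case wl: True
        have sq: "(\<Sum>y<n. (w y)\<^sup>2) = (\<Sum>z<n. (lam z)\<^sup>2)"
          using sum.permute[OF tp, of "\<lambda>z. (lam z)\<^sup>2"] wl by (simp add: comp_def)
        define T where "T y z = B y z * (lam z - w y)\<^sup>2" for y z
        have Ty: "(\<Sum>z<n. T y z) = (\<Sum>z<n. B y z * (lam z)\<^sup>2) - (w y)\<^sup>2" if y: "y < n" for y
        proof -
          have "(\<Sum>z<n. T y z) = (\<Sum>z<n. B y z * (lam z)\<^sup>2 - 2 * w y * (B y z * lam z) + (w y)\<^sup>2 * B y z)"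
            unfolding T_def by (intro sum.cong refl) (simp add: power2_eq_square algebra_simps)
          also have "\<dots> = (\<Sum>z<n. B y z * (lam z)\<^sup>2) - 2 * w y * (\<Sum>z<n. B y z * lam z) + (w y)\<^sup>2 * (\<Sum>z<n. B y z)"
            by (simp add: sum.distrib sum_subtractf sum_distrib_left)
          also have "\<dots> = (\<Sum>z<n. B y z * (lam z)\<^sup>2) - (w y)\<^sup>2"
            using wB rows y by (simp add: power2_eq_square)
          finally show ?thesis .
        qed
        have "(\<Sum>y<n. \<Sum>z<n. T y z) = (\<Sum>y<n. (\<Sum>z<n. B y z * (lam z)\<^sup>2) - (w y)\<^sup>2)"
          by (intro sum.cong refl) (use Ty in auto)
        also have "\<dots> = (\<Sum>y<n. \<Sum>z<n. B y z * (lam z)\<^sup>2) - (\<Sum>y<n. (w y)\<^sup>2)"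
          by (simp add: sum_subtractf)
        also have "(\<Sum>y<n. \<Sum>z<n. B y z * (lam z)\<^sup>2) = (\<Sum>z<n. \<Sum>y<n. B y z * (lam z)\<^sup>2)"
          by (rule sum.swap)
        also have "\<dots> = (\<Sum>z<n. (lam z)\<^sup>2)"
          by (intro sum.cong refl) (use cols in \<open>simp add: sum_distrib_right[symmetric]\<close>)
        finally have T0: "(\<Sum>y<n. \<Sum>z<n. T y z) = 0" using sq by simp
        have Tnn: "\<forall>y<n. \<forall>z<n. 0 \<le> T y z" unfolding T_def using Bnn by auto
        have inner0: "\<forall>y\<in>{..<n}. (\<Sum>z<n. T y z) = 0"
        proof -
          have "(\<Sum>y<n. \<Sum>z<n. T y z) = 0 \<longleftrightarrow> (\<forall>y\<in>{..<n}. (\<Sum>z<n. T y z) = 0)"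
            by (rule sum_nonneg_eq_0_iff) (use Tnn in \<open>auto intro!: sum_nonneg\<close>)
          then show ?thesis using T0 by simp
        qed
        have T_each: "T y z = 0" if y: "y < n" and z: "z < n" for y z
        proof -
          have "(\<Sum>z<n. T y z) = 0 \<longleftrightarrow> (\<forall>z\<in>{..<n}. T y z = 0)"
            by (rule sum_nonneg_eq_0_iff) (use Tnn y in auto)
          then show ?thesis using inner0 y z by simp
        qed
        have ev: "\<forall>y<n. \<forall>i<n. (\<Sum>j<n. \<rho> $$ (i,j) * x' y $ j) = complex_of_real (lam' y) * x' y $ i"
        proof (intro allI impI)
          fix y i assume y: "y < n" and i: "i < n"
          have "(\<Sum>j<n. \<rho> $$ (i,j) * x' y $ j) = (\<Sum>z<n. complex_of_real (lam z) * x z $ i * ci n (x' y) (x z))"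
            unfolding Rl by (rule rep_apply[OF i])
          also have "\<dots> = (\<Sum>z<n. complex_of_real (w y) * (ci n (x' y) (x z) * x z $ i))"
          proof (intro sum.cong refl)
            fix z assume "z \<in> {..<n}"
            then have z: "z < n" by simp
            have "T y z = 0" using T_each y z by auto
            then have "B y z = 0 \<or> lam z = w y" unfolding T_def by auto
            then have "ci n (x' y) (x z) = 0 \<or> lam z = w y" unfolding B_def by auto
            then show "complex_of_real (lam z) * x z $ i * ci n (x' y) (x z) =
                complex_of_real (w y) * (ci n (x' y) (x z) * x z $ i)"
              by (auto simp: mult_ac)
          qed
          also have "\<dots> = complex_of_real (w y) * x' y $ i"
            by (simp add: sum_distrib_left[symmetric] expansion[OF o xc'[OF y] i])
          finally show "(\<Sum>j<n. \<rho> $$ (i,j) * x' y $ j) = complex_of_real (lam' y) * x' y $ i"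
            using True by simp
        qed
        have "\<rho> = rep n x' lam'" by (rule reconstruct[OF o' rc ev])
        then have "\<rho> = \<rho>'" using Rl' by simp
        then show ?thesis using ne by simp
      qed
    qed
  qed
qed

lemma bwd:
  assumes pi: "perm_invariant n s" and sm: "spectral_measurement n \<mu>"
    and p: "p \<in> simplex n" and q: "q \<in> simplex n"
  shows "\<exists>\<rho> \<rho>'. \<rho> \<in> Dens n \<and> \<rho>' \<in> Dens n \<and>
    spec_exp_score n s \<mu> \<rho>' \<rho> = exp_score n s q p \<and>
    spec_exp_score n s \<mu> \<rho> \<rho> = exp_score n s p p \<and>
    (q \<noteq> p \<longrightarrow> \<rho>' \<noteq> \<rho>)"
proof -
  obtain \<sigma> where sq: "\<sigma> permutes {..<n}" and qdec: "\<forall>i j. i \<le> j \<longrightarrow> j < n \<longrightarrow> q (\<sigma> j) \<le> q (\<sigma> i)"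
    using sort_perm[of n q] by blast
  obtain \<pi> where spp: "\<pi> permutes {..<n}" and pdec: "\<forall>i j. i \<le> j \<longrightarrow> j < n \<longrightarrow> p (\<pi> j) \<le> p (\<pi> i)"
    using sort_perm[of n p] by blast
  define q' where "q' = q \<circ> \<sigma>"
  define p' where "p' = p \<circ> \<sigma>"
  have q's: "q' \<in> simplex n" unfolding q'_def by (rule simplex_perm[OF sq q])
  have p's: "p' \<in> simplex n" unfolding p'_def by (rule simplex_perm[OF sq p])
  define e where "e = (\<lambda>y. unit_vec n y :: complex vec)"
  have oe: "onb n e" unfolding e_def by (rule unit_onb)
  define \<rho>' where "\<rho>' = rep n e q'"
  have r': "\<rho>' \<in> Dens n" unfolding \<rho>'_def using q's oe by (intro rep_dens) (auto simp: simplex_def)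
  have eq': "eigvals n \<rho>' = q'"
  proof (rule eig_eq)
    show "\<forall>i\<ge>n. q' i = 0" using q's unfolding simplex_def by auto
    show "\<forall>i j. i \<le> j \<longrightarrow> j < n \<longrightarrow> q' j \<le> q' i" using qdec unfolding q'_def by auto
    show "char_poly \<rho>' = (\<Prod>i<n. [:- complex_of_real (q' i), 1:])" unfolding \<rho>'_def by (rule char_rep[OF oe])
  qed
  obtain x' where o': "onb n x'" and mu': "\<forall>y<n. \<mu> \<rho>' y = outer (x' y)"
    and R': "\<rho>' = rep n x' (eigvals n \<rho>')" and "eigvals n \<rho>' \<in> simplex n"
    and "\<forall>i j. i \<le> j \<longrightarrow> j < n \<longrightarrow> eigvals n \<rho>' j \<le> eigvals n \<rho>' i"
    by (rule dens_basis[OF sm r'])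
  have R'': "\<rho>' = rep n x' q'" using R'[unfolded eq'] .
  define \<rho> where "\<rho> = rep n x' p'"
  have r: "\<rho> \<in> Dens n" unfolding \<rho>_def using p's o' by (intro rep_dens) (auto simp: simplex_def)
  have rc: "\<rho> \<in> carrier_mat n n" unfolding \<rho>_def by simp
  have W: "(\<lambda>y. if y < n then Re (quad n (x' y) \<rho>) else 0) = p'"
  proof
    fix y show "(if y < n then Re (quad n (x' y) \<rho>) else 0) = p' y"
    proof (cases "y < n")
      case True
      then show ?thesis using quad_rep_basis[OF o' True, of p'] unfolding \<rho>_def by simp
    qed (use p's in \<open>auto simp: simplex_def\<close>)
  qed
  have s1: "spec_exp_score n s \<mu> \<rho>' \<rho> = exp_score n s q p"
  proof -
    have "spec_exp_score n s \<mu> \<rho>' \<rho> = exp_score n s q' p'"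
      using spec_eq[of n \<mu> \<rho>' x' \<rho> s, OF mu' o' rc] W eq' by simp
    also have "\<dots> = exp_score n s q p" unfolding q'_def p'_def by (rule exp_perm[OF pi sq q])
    finally show ?thesis .
  qed
  have eqr: "eigvals n \<rho> = p \<circ> \<pi>"
  proof (rule eig_eq)
    show "\<forall>i\<ge>n. (p \<circ> \<pi>) i = 0" using simplex_perm[OF spp p] unfolding simplex_def by auto
    show "\<forall>i j. i \<le> j \<longrightarrow> j < n \<longrightarrow> (p \<circ> \<pi>) j \<le> (p \<circ> \<pi>) i" using pdec by auto
    have "char_poly \<rho> = (\<Prod>i<n. [:- complex_of_real (p' i), 1:])" unfolding \<rho>_def by (rule char_rep[OF o'])
    also have "\<dots> = (\<Prod>i<n. [:- complex_of_real (p i), 1:])"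
      using prod.permute[OF sq, of "\<lambda>i. [:- complex_of_real (p i), 1:]"] unfolding p'_def by (simp add: comp_def)
    also have "\<dots> = (\<Prod>i<n. [:- complex_of_real ((p \<circ> \<pi>) i), 1:])"
      using prod.permute[OF spp, of "\<lambda>i. [:- complex_of_real (p i), 1:]"] by (simp add: comp_def)
    finally show "char_poly \<rho> = (\<Prod>i<n. [:- complex_of_real ((p \<circ> \<pi>) i), 1:])" .
  qed
  have s2: "spec_exp_score n s \<mu> \<rho> \<rho> = exp_score n s p p"
  proof -
    have "spec_exp_score n s \<mu> \<rho> \<rho> = exp_score n s (p \<circ> \<pi>) (p \<circ> \<pi>)"
      using spec_self[OF sm r, of s] eqr by simp
    also have "\<dots> = exp_score n s p p" by (rule exp_perm[OF pi spp p])
    finally show ?thesis .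
  qed
  have ne: "\<rho>' \<noteq> \<rho>" if qp: "q \<noteq> p"
  proof
    assume eq: "\<rho>' = \<rho>"
    obtain y where qy: "q y \<noteq> p y" using qp by auto
    have y: "y < n"
    proof (rule ccontr)
      assume "\<not> y < n"
      then have "q y = 0" "p y = 0" using p q unfolding simplex_def by auto
      with qy show False by simp
    qed
    define k where "k = inv_into UNIV \<sigma> y"
    have k: "k < n" unfolding k_def using permutes_in_image[OF permutes_inv[OF sq]] y by auto
    have sk: "\<sigma> k = y" unfolding k_def by (rule surj_f_inv_f[OF permutes_surj[OF sq]])
    have "q' k \<noteq> p' k" using qy sk unfolding q'_def p'_def by simp
    moreover have "quad n (x' k) \<rho>' = complex_of_real (q' k)"
      unfolding R'' by (rule quad_rep_basis[OF o' k])
    moreover have "quad n (x' k) \<rho> = complex_of_real (p' k)"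
      unfolding \<rho>_def by (rule quad_rep_basis[OF o' k])
    ultimately show False using eq by simp
  qed
  show ?thesis using r r' s1 s2 ne by blast
qed

theorem theorem4p4:
  fixes n :: nat
    and s :: "(nat \<Rightarrow> real) \<Rightarrow> nat \<Rightarrow> ereal"
    and \<mu> :: "complex mat \<Rightarrow> nat \<Rightarrow> complex mat"
  assumes "perm_invariant n s"
    and "regular n s"
    and "spectral_measurement n \<mu>"
  shows "(truthful n s \<mu> \<longleftrightarrow> proper n s) \<and>
         (strictly_truthful n s \<mu> \<longleftrightarrow> strictly_proper n s)"
proof -
  have T1: "truthful n s \<mu> \<longleftrightarrow> proper n s"
  proof
    assume t: "truthful n s \<mu>"
    show "proper n s" unfolding proper_def
    proof (intro ballI)
      fix p q assume p: "p \<in> simplex n" and q: "q \<in> simplex n"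
      obtain \<rho> \<rho>' where a: "\<rho> \<in> Dens n" "\<rho>' \<in> Dens n"
        and b: "spec_exp_score n s \<mu> \<rho>' \<rho> = exp_score n s q p"
        and c: "spec_exp_score n s \<mu> \<rho> \<rho> = exp_score n s p p"
        and d: "q \<noteq> p \<longrightarrow> \<rho>' \<noteq> \<rho>"
        using bwd[OF assms(1) assms(3) p q] by blast
      have "spec_exp_score n s \<mu> \<rho>' \<rho> \<le> spec_exp_score n s \<mu> \<rho> \<rho>"
        using t a unfolding truthful_def by blast
      then show "exp_score n s q p \<le> exp_score n s p p" unfolding b c .
    qed
  next
    assume "proper n s"
    then show "truthful n s \<mu>" unfolding truthful_def using fwd(1)[OF assms] by blast
  qed
  have T2: "strictly_truthful n s \<mu> \<longleftrightarrow> strictly_proper n s"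
  proof
    assume t: "strictly_truthful n s \<mu>"
    show "strictly_proper n s" unfolding strictly_proper_def
    proof (intro ballI impI)
      fix p q assume p: "p \<in> simplex n" and q: "q \<in> simplex n" and qp: "q \<noteq> p"
      obtain \<rho> \<rho>' where a: "\<rho> \<in> Dens n" "\<rho>' \<in> Dens n"
        and b: "spec_exp_score n s \<mu> \<rho>' \<rho> = exp_score n s q p"
        and c: "spec_exp_score n s \<mu> \<rho> \<rho> = exp_score n s p p"
        and d: "q \<noteq> p \<longrightarrow> \<rho>' \<noteq> \<rho>"
        using bwd[OF assms(1) assms(3) p q] by blast
      have "spec_exp_score n s \<mu> \<rho>' \<rho> < spec_exp_score n s \<mu> \<rho> \<rho>"
        using t a d qp unfolding strictly_truthful_def by blast
      then show "exp_score n s q p < exp_score n s p p" unfolding b c .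
    qed
  next
    assume "strictly_proper n s"
    then show "strictly_truthful n s \<mu>" unfolding strictly_truthful_def using fwd(2)[OF assms] by blast
  qed
  show ?thesis using T1 T2 by blast
qed



end
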